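(* Let $\lambda_1,\lambda_2>0$ and let the input domain be the set of integers $\mathbb{Z}$. Let $\mathcal{M}_{\mathrm{skell}(\lambda_1,\lambda_2)}$ be the algorithm that adds to its input a random integer with the Skellam$(\lambda_1,\lambda_2)$ distribution, and let $f_Z(\cdot;\lambda_1,\lambda_2)$ be the probability mass function of that distribution. A bounded row vector $\vec x=(\dots,x_{-2},x_{-1},x_0,x_1,x_2,\dots)$ belongs to $\mathrm{rowcone}(\{\mathcal{M}_{\mathrm{skell}(\lambda_1,\lambda_2)}\})$ if for all integers $k$, $$\sum_{j=-\infty}^{\infty}(-1)^j f_Z(j;\lambda_1,\lambda_2)\,x_{k+j}\ \ge\ 0.$$
   Context: A random variable has the Skellam$(\lambda_1,\lambda_2)$ distribution if it equals $X-Y$ with $X,Y$ independent, $X\sim$ Poisson$(\lambda_1)$ and $Y\sim$ Poisson$(\lambda_2)$ (Poisson$(\lambda)$ has mass $e^{-\lambda}\lambda^k/k!$ on nonnegative integers $k$). An algorithm is identified with its output probabilities. For algorithms $\mathcal{M}$, $\mathcal{A}$ with $\mathrm{range}(\mathcal{M})\subseteq\mathrm{domain}(\mathcal{A})$ and independent randomness, $\mathcal{A}\circ\mathcal{M}$ runs $\mathcal{M}$ then $\mathcal{A}$ on its output. $\mathrm{CNF}(\mathrm{Priv})$ of a set of algorithms with domain $\mathbb{Z}$ is the smallest set $S$ containing $\mathrm{Priv}$ such that $\mathcal{M}\in S$ implies $\mathcal{A}\circ\mathcal{M}\in S$ for every such $\mathcal{A}$, and $\mathcal{M}_1,\mathcal{M}_2\in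 S$, $t\in[0,1]$ implies that the algorithm running $\mathcal{M}_1$ with probability $t$ and $\mathcal{M}_2$ with probability $1-t$ is in $S$. $\mathrm{rowcone}(\mathrm{Priv})=\{(c\,P[\mathcal{M}(n)=\omega])_{n\in\mathbb{Z}} : c\ge0,\ \mathcal{M}\in\mathrm{CNF}(\mathrm{Priv}),\ \omega\in\mathrm{range}(\mathcal{M})\}$. *)

theory Defs
  imports "HOL-Analysis.Analysis" "HOL-Probability.Probability"
begin

type_synonym alg = "int \<Rightarrow> int pmf"

definition skellam_pmf :: "real \<Rightarrow> real \<Rightarrow> int pmf" where
  "skellam_pmf l1 l2 =
     map_pmf (\<lambda>(x, y). int x - int y) (pair_pmf (poisson_pmf l1) (poisson_pmf l2))"

definition f_Z :: "int \<Rightarrow> real \<Rightarrow> real \<Rightarrow> real" where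
  "f_Z j l1 l2 = pmf (skellam_pmf l1 l2) j"

definition M_skell :: "real \<Rightarrow> real \<Rightarrow> alg" where
  "M_skell l1 l2 = (\<lambda>n. map_pmf (\<lambda>z. n + z) (skellam_pmf l1 l2))"

definition postproc :: "(int \<Rightarrow> int pmf) \<Rightarrow> alg \<Rightarrow> alg" where
  "postproc A M = (\<lambda>n. bind_pmf (M n) A)"

definition mixture :: "real \<Rightarrow> alg \<Rightarrow> alg \<Rightarrow> alg" where
  "mixture t M1 M2 = (\<lambda>n. bind_pmf (bernoulli_pmf t) (\<lambda>b. if b then M1 n else M2 n))"

inductive_set CNF :: "alg set \<Rightarrow> alg set" for Priv :: "alg set" where
  base: "M \<in> Priv \<Longrightarrow> M \<in> CNF Priv"
| post: "M \<in> CNF Priv \<Longrightarrow> postproc A M \<in> CNF Priv"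
| mix: "M1 \<in> CNF Priv \<Longrightarrow> M2 \<in> CNF Priv \<Longrightarrow> 0 \<le> t \<Longrightarrow> t \<le> 1
          \<Longrightarrow> mixture t M1 M2 \<in> CNF Priv"

definition alg_range :: "alg \<Rightarrow> int set" where
  "alg_range M = (\<Union>n. set_pmf (M n))"

definition rowcone :: "alg set \<Rightarrow> (int \<Rightarrow> real) set" where
  "rowcone Priv = {(\<lambda>n. c * pmf (M n) \<omega>) | c M \<omega>.
      c \<ge> 0 \<and> M \<in> CNF Priv \<and> \<omega> \<in> alg_range M}"

end

theory Submission
  imports Defs
begin


lemma pmf_summable: "pmf p summable_on A"
proof -
  have "Infinite_Set_Sum.abs_summable_on (pmf p) A" by (rule pmf_abs_summable)
  then have "Infinite_Sum.abs_summable_on (pmf p) A" using abs_summable_equivalent by blast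
  then show ?thesis using summable_on_iff_abs_summable_on_real by blast
qed

lemma pmf_infsum1: "(\<Sum>\<^sub>\<infinity>x. pmf p x) = 1"
proof -
  have "infsetsum (pmf p) UNIV = 1" by (rule infsetsum_pmf_eq_1) auto
  moreover have "infsetsum (pmf p) UNIV = infsum (pmf p) UNIV"
    by (rule infsetsum_infsum) (rule pmf_abs_summable)
  ultimately show ?thesis by simp
qed

lemma pmf_pair': "pmf (pair_pmf p q) x = pmf p (fst x) * pmf q (snd x)"
  by (cases x) (simp add: pmf_pair)

lemma wsumm:
  fixes f :: "'a \<Rightarrow> real"
  assumes "\<And>x. \<bar>f x\<bar> \<le> B"
  shows "(\<lambda>x. pmf p x * f x) summable_on A"
proof -
  have "(\<lambda>x. B * pmf p x) summable_on A"
    by (intro summable_on_cmult_right pmf_summable)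
  then have "Infinite_Sum.abs_summable_on (\<lambda>x. B * pmf p x) A"
    by (rule summable_on_iff_abs_summable_on_real[THEN iffD1])
  then have "Infinite_Sum.abs_summable_on (\<lambda>x. pmf p x * f x) A"
  proof (rule Infinite_Sum.abs_summable_on_comparison_test)
    fix x
    have B0: "0 \<le> B" using assms[of x] by linarith
    have "pmf p x * \<bar>f x\<bar> \<le> pmf p x * B"
      by (rule mult_left_mono[OF assms[of x] pmf_nonneg])
    then show "norm (pmf p x * f x) \<le> norm (B * pmf p x)"
      using B0 by (simp add: abs_mult mult.commute)
  qed
  then show ?thesis by (rule summable_on_iff_abs_summable_on_real[THEN iffD2])
qed

lemma wbound:
  fixes f :: "'a \<Rightarrow> real"
  assumes "\<And>x. \<bar>f x\<bar> \<le> B"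
  shows "\<bar>\<Sum>\<^sub>\<infinity>x. pmf p x * f x\<bar> \<le> B"
proof -
  have B: "(\<lambda>x. B * pmf p x) summable_on UNIV"
    by (intro summable_on_cmult_right pmf_summable)
  have s1: "(\<lambda>x. pmf p x * f x) summable_on UNIV" using wsumm assms by blast
  have s2: "(\<lambda>x. pmf p x * (- f x)) summable_on UNIV" using wsumm[of "\<lambda>x. - f x" B] assms by auto
  have "(\<Sum>\<^sub>\<infinity>x. pmf p x * f x) \<le> (\<Sum>\<^sub>\<infinity>x. B * pmf p x)"
    apply (rule infsum_mono[OF s1 B]) using assms
    by (metis abs_le_D1 mult.commute mult_right_mono pmf_nonneg)
  moreover have "(\<Sum>\<^sub>\<infinity>x. pmf p x * (- f x)) \<le> (\<Sum>\<^sub>\<infinity>x. B * pmf p x)"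
    apply (rule infsum_mono[OF s2 B]) using assms
    by (metis abs_le_D2 mult.commute mult_right_mono pmf_nonneg)
  moreover have "(\<Sum>\<^sub>\<infinity>x. B * pmf p x) = B"
    by (subst infsum_cmult_right) (auto simp: pmf_summable pmf_infsum1)
  moreover have "(\<Sum>\<^sub>\<infinity>x. pmf p x * (- f x)) = - (\<Sum>\<^sub>\<infinity>x. pmf p x * f x)"
    by (simp add: infsum_uminus)
  ultimately show ?thesis by linarith
qed

lemma pair_sum:
  fixes f :: "'a \<Rightarrow> 'b \<Rightarrow> real"
  assumes "\<And>a b. \<bar>f a b\<bar> \<le> B"
  shows "(\<Sum>\<^sub>\<infinity>(a,b). pmf p a * pmf q b * f a b) = (\<Sum>\<^sub>\<infinity>a. pmf p a * (\<Sum>\<^sub>\<infinity>b. pmf q b * f a b))"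
proof -
  have s: "(\<lambda>(a,b). pmf p a * pmf q b * f a b) summable_on (Sigma UNIV (\<lambda>_. UNIV))"
    using wsumm[of "\<lambda>(a,b). f a b" B "pair_pmf p q" UNIV] assms
    by (simp add: pmf_pair' case_prod_unfold)
  have "(\<Sum>\<^sub>\<infinity>a. pmf p a * (\<Sum>\<^sub>\<infinity>b. pmf q b * f a b)) = (\<Sum>\<^sub>\<infinity>a. (\<Sum>\<^sub>\<infinity>b. pmf p a * pmf q b * f a b))"
    by (intro infsum_cong) (subst infsum_cmult_right[symmetric], auto intro: wsumm assms simp: mult.assoc)
  also have "\<dots> = (\<Sum>\<^sub>\<infinity>(a,b)\<in>Sigma UNIV (\<lambda>_. UNIV). pmf p a * pmf q b * f a b)"
    using infsum_Sigma'_banach[OF s] by simp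
  finally show ?thesis by simp
qed

lemma fubini:
  fixes f :: "'a \<Rightarrow> 'b \<Rightarrow> real"
  assumes "\<And>a b. \<bar>f a b\<bar> \<le> B"
  shows "(\<Sum>\<^sub>\<infinity>a. pmf p a * (\<Sum>\<^sub>\<infinity>b. pmf q b * f a b)) = (\<Sum>\<^sub>\<infinity>b. pmf q b * (\<Sum>\<^sub>\<infinity>a. pmf p a * f a b))"
proof -
  have s: "(\<lambda>(a,b). pmf p a * pmf q b * f a b) summable_on (UNIV \<times> UNIV)"
    using wsumm[of "\<lambda>(a,b). f a b" B "pair_pmf p q" UNIV] assms
    by (simp add: pmf_pair' case_prod_unfold)
  have "(\<Sum>\<^sub>\<infinity>a. pmf p a * (\<Sum>\<^sub>\<infinity>b. pmf q b * f a b)) = (\<Sum>\<^sub>\<infinity>a. (\<Sum>\<^sub>\<infinity>b. pmf p a * pmf q b * f a b))"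
    by (intro infsum_cong) (subst infsum_cmult_right[symmetric], auto intro: wsumm assms simp: mult.assoc)
  also have "\<dots> = (\<Sum>\<^sub>\<infinity>b. (\<Sum>\<^sub>\<infinity>a. pmf p a * pmf q b * f a b))"
    using infsum_swap_banach[OF s] by simp
  also have "\<dots> = (\<Sum>\<^sub>\<infinity>b. pmf q b * (\<Sum>\<^sub>\<infinity>a. pmf p a * f a b))"
    by (intro infsum_cong) (subst infsum_cmult_right[symmetric], auto intro: wsumm assms simp: mult_ac)
  finally show ?thesis .
qed

lemma expect_infsum:
  fixes f :: "'a \<Rightarrow> real"
  assumes "\<And>x. \<bar>f x\<bar> \<le> B"
  shows "measure_pmf.expectation p f = (\<Sum>\<^sub>\<infinity>x. pmf p x * f x)"
proof -
  have "Infinite_Set_Sum.abs_summable_on (\<lambda>x. pmf p x * f x) UNIV"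
    using abs_summable_equivalent[THEN iffD1, OF summable_on_iff_abs_summable_on_real[THEN iffD1, OF wsumm[of f B p UNIV]]] assms by blast
  then show ?thesis by (simp add: pmf_expectation_eq_infsetsum infsetsum_infsum)
qed

lemma bij_diag: "bij_betw (\<lambda>(s,k). (s - k, k::nat)) (SIGMA s:UNIV. {..s}) UNIV"
  by (rule bij_betw_byWitness[where f'="\<lambda>(a,b). (a+b,b)"]) auto

lemma poisson_prod:
  assumes "l > 0" "k \<le> s"
  shows "pmf (poisson_pmf l) (s - k) * pmf (poisson_pmf l) k
       = exp (-2*l) * (l ^ s / fact s) * of_nat (s choose k)"
proof -
  have a: "l ^ (s - k) * l ^ k = l ^ s" using assms(2) by (metis le_add_diff_inverse2 power_add)
  have b: "exp (-l) * exp (-l) = exp (-2*l)" by (simp add: exp_add[symmetric])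
  have "pmf (poisson_pmf l) (s - k) * pmf (poisson_pmf l) k
      = (l ^ (s - k) * l ^ k) * (exp (-l) * exp (-l)) / (fact (s-k) * fact k)"
    using assms by simp
  also have "\<dots> = l ^ s * exp (-2*l) / (fact (s-k) * fact k)" by (simp only: a b)
  also have "\<dots> = exp (-2*l) * (l ^ s / fact s) * of_nat (s choose k)"
    using assms by (simp add: binomial_fact mult.commute)
  finally show ?thesis .
qed

lemma alt_conv:
  fixes h :: "nat \<Rightarrow> real"
  assumes l: "l > 0" and hb: "\<And>s. \<bar>h s\<bar> \<le> B"
  shows "(\<Sum>\<^sub>\<infinity>a. pmf (poisson_pmf l) a * (\<Sum>\<^sub>\<infinity>a'. pmf (poisson_pmf l) a' * ((-1)^a' * h (a+a'))))
         = exp (-2*l) * h 0"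
proof -
  define w where "w = pmf (poisson_pmf l)"
  define F where "F = (\<lambda>(a,a'). w a * w a' * ((-1)^a' * h (a+a')))"
  have bnd: "\<bar>(-1)^a' * h (a+a')\<bar> \<le> B" for a a' :: nat
    using hb[of "a+a'"] by (simp add: abs_mult)
  have "(\<Sum>\<^sub>\<infinity>a. w a * (\<Sum>\<^sub>\<infinity>a'. w a' * ((-1)^a' * h (a+a')))) = infsum F UNIV"
    unfolding F_def w_def using pair_sum[of "\<lambda>a a'. (-1)^a' * h (a+a')" B, OF bnd] by simp
  also have "\<dots> = infsum (\<lambda>x. F ((\<lambda>(s,k). (s - k, k)) x)) (SIGMA s:UNIV. {..s})"
    by (rule infsum_reindex_bij_betw[OF bij_diag, symmetric])
  also have "\<dots> = infsum (\<lambda>(s,k). w (s-k) * w k * ((-1)^k * h s)) (SIGMA s:UNIV. {..s})"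
    by (intro infsum_cong) (auto simp: F_def)
  also have "\<dots> = (\<Sum>\<^sub>\<infinity>s. \<Sum>\<^sub>\<infinity>k\<in>{..s}. w (s-k) * w k * ((-1)^k * h s))"
  proof -
    have "F summable_on UNIV"
      unfolding F_def w_def
      using wsumm[of "\<lambda>(a,a'). (-1)^a' * h (a+a')" B "pair_pmf (poisson_pmf l) (poisson_pmf l)" UNIV] bnd
      by (simp add: pmf_pair' case_prod_unfold)
    then have "(\<lambda>x. F ((\<lambda>(s,k). (s - k, k)) x)) summable_on (SIGMA s:UNIV. {..s})"
      using summable_on_reindex_bij_betw[OF bij_diag] by blast
    then have "(\<lambda>(s,k). w (s-k) * w k * ((-1)^k * h s)) summable_on (SIGMA s:UNIV. {..s})"
      by (rule summable_on_cong[THEN iffD1, rotated]) (auto simp: F_def)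
    then show ?thesis using infsum_Sigma'_banach by fastforce
  qed
  also have "\<dots> = (\<Sum>\<^sub>\<infinity>s::nat. if s = 0 then exp (-2*l) * h 0 else 0)"
  proof (rule infsum_cong)
    fix s :: nat
    have "(\<Sum>\<^sub>\<infinity>k\<in>{..s}. w (s-k) * w k * ((-1)^k * h s))
        = (\<Sum>k\<le>s. exp (-2*l) * (l ^ s / fact s) * h s * ((-1)^k * of_nat (s choose k)))"
      by (simp, intro sum.cong) (auto simp: w_def poisson_prod[OF l])
    also have "\<dots> = exp (-2*l) * (l ^ s / fact s) * h s * (\<Sum>k\<le>s. (-1)^k * of_nat (s choose k))"
      by (simp add: sum_distrib_left)
    also have "\<dots> = (if s = 0 then exp (-2*l) * h 0 else 0)"
      using choose_alternating_sum[of s, where 'a=real] by auto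
    finally show "(\<Sum>\<^sub>\<infinity>k\<in>{..s}. w (s-k) * w k * ((-1)^k * h s)) = (if s = 0 then exp (-2*l) * h 0 else 0)" .
  qed
  also have "\<dots> = exp (-2*l) * h 0"
    by (subst infsum_cong_neutral[where T="{0}"]) auto
  finally show ?thesis unfolding w_def .
qed


lemma powi_sign: "(-1::real) powi (int a - int b) = (-1)^a * (-1)^b"
  by (cases "even b") (auto simp: power_int_diff power_int_of_nat)

lemma powi_abs: "\<bar>(-1::real) powi j\<bar> = 1"
  by (simp add: power_int_abs)

lemma hyp_conv:
  fixes x :: "int \<Rightarrow> real"
  assumes xb: "\<And>n. \<bar>x n\<bar> \<le> B"
  shows "(\<Sum>\<^sub>\<infinity>j\<in>(UNIV::int set). (-1) powi j * f_Z j l1 l2 * x (k + j))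
     = (\<Sum>\<^sub>\<infinity>a. pmf (poisson_pmf l1) a * (\<Sum>\<^sub>\<infinity>b. pmf (poisson_pmf l2) b *
            ((-1)^a * (-1)^b * x (k + int a - int b))))"
proof -
  define S where "S = skellam_pmf l1 l2"
  define PP where "PP = pair_pmf (poisson_pmf l1) (poisson_pmf l2)"
  have b1: "\<bar>(-1) powi j * x (k + j)\<bar> \<le> B" for j
    using xb[of "k+j"] by (simp add: abs_mult powi_abs)
  have b2: "\<bar>(-1)^a * (-1)^b * x (k + int a - int b)\<bar> \<le> B" for a b :: nat
    using xb[of "k + int a - int b"] by (simp add: abs_mult)
  have "(\<Sum>\<^sub>\<infinity>j\<in>(UNIV::int set). (-1) powi j * f_Z j l1 l2 * x (k + j))
      = (\<Sum>\<^sub>\<infinity>j. pmf S j * ((-1) powi j * x (k + j)))"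
    by (intro infsum_cong) (simp add: f_Z_def S_def)
  also have "\<dots> = measure_pmf.expectation S (\<lambda>j. (-1) powi j * x (k + j))"
    by (rule expect_infsum[symmetric, OF b1])
  also have "\<dots> = measure_pmf.expectation PP (\<lambda>(a,b). (-1) powi (int a - int b) * x (k + (int a - int b)))"
    by (simp add: S_def PP_def skellam_pmf_def case_prod_unfold)
  also have "\<dots> = measure_pmf.expectation PP (\<lambda>(a,b). (-1)^a * (-1)^b * x (k + int a - int b))"
    by (intro Bochner_Integration.integral_cong) (auto simp: powi_sign algebra_simps)
  also have "\<dots> = (\<Sum>\<^sub>\<infinity>ab. pmf PP ab * (\<lambda>(a,b). (-1)^a * (-1)^b * x (k + int a - int b)) ab)"
    by (rule expect_infsum[where B=B]) (auto simp: b2)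
  also have "\<dots> = (\<Sum>\<^sub>\<infinity>(a,b). pmf (poisson_pmf l1) a * pmf (poisson_pmf l2) b * ((-1)^a * (-1)^b * x (k + int a - int b)))"
    by (intro infsum_cong) (auto simp: PP_def pmf_pair)
  also have "\<dots> = (\<Sum>\<^sub>\<infinity>a. pmf (poisson_pmf l1) a * (\<Sum>\<^sub>\<infinity>b. pmf (poisson_pmf l2) b *
            ((-1)^a * (-1)^b * x (k + int a - int b))))"
    by (rule pair_sum[where B=B]) (rule b2)
  finally show ?thesis .
qed


lemma inner_bound:
  fixes g :: "'a \<Rightarrow> 'b \<Rightarrow> real"
  assumes "\<And>a b. \<bar>g a b\<bar> \<le> B"
  shows "\<bar>\<Sum>\<^sub>\<infinity>a. pmf p a * (\<Sum>\<^sub>\<infinity>b. pmf q b * g a b)\<bar> \<le> B"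
  by (rule wbound) (rule wbound, rule assms)

lemma core:
  fixes x :: "int \<Rightarrow> real"
  assumes l1: "l1 > 0" and l2: "l2 > 0" and xb: "\<And>n. \<bar>x n\<bar> \<le> B"
  defines "y \<equiv> \<lambda>k. (\<Sum>\<^sub>\<infinity>a. pmf (poisson_pmf l1) a * (\<Sum>\<^sub>\<infinity>b. pmf (poisson_pmf l2) b *
            ((-1)^a * (-1)^b * x (k + int a - int b))))"
  shows "(\<Sum>\<^sub>\<infinity>a. pmf (poisson_pmf l1) a * (\<Sum>\<^sub>\<infinity>b. pmf (poisson_pmf l2) b * y (n + int a - int b)))
       = exp (-2*l1) * exp (-2*l2) * x n"
proof -
  define p1 where "p1 = poisson_pmf l1"
  define p2 where "p2 = poisson_pmf l2"
  define G where "G = (\<lambda>a b a'. \<Sum>\<^sub>\<infinity>b'. pmf p2 b' * ((-1::real)^a' * (-1)^b' * x (n + int a - int b + int a' - int b')))"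
  define h where "h = (\<lambda>s::nat. \<Sum>\<^sub>\<infinity>b. pmf p2 b * (\<Sum>\<^sub>\<infinity>b'. pmf p2 b' * ((-1::real)^b' * x (n + int s - int (b + b')))))"
  have xb': "\<bar>(-1::real)^i * (-1)^j * x k\<bar> \<le> B" for i j k
    using xb[of k] by (simp add: abs_mult)
  have xb'': "\<bar>(-1::real)^j * x k\<bar> \<le> B" for j k
    using xb[of k] by (simp add: abs_mult)
  have Gb: "\<bar>G a b a'\<bar> \<le> B" for a b a'
    unfolding G_def by (rule wbound) (rule xb')
  have hb: "\<bar>h s\<bar> \<le> B" for s
    unfolding h_def by (rule inner_bound) (rule xb'')
  have step1: "(\<Sum>\<^sub>\<infinity>b. pmf p2 b * y (n + int a - int b)) = (\<Sum>\<^sub>\<infinity>b. pmf p2 b * (\<Sum>\<^sub>\<infinity>a'. pmf p1 a' * G a b a'))"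
    for a
    unfolding y_def G_def p1_def p2_def by simp
  have step2: "(\<Sum>\<^sub>\<infinity>b. pmf p2 b * (\<Sum>\<^sub>\<infinity>a'. pmf p1 a' * G a b a')) = (\<Sum>\<^sub>\<infinity>a'. pmf p1 a' * (\<Sum>\<^sub>\<infinity>b. pmf p2 b * G a b a'))"
    for a
    by (rule fubini[where B=B]) (rule Gb)
  have step3: "(\<Sum>\<^sub>\<infinity>b. pmf p2 b * G a b a') = (-1)^a' * h (a + a')" for a a'
  proof -
    have "G a b a' = (-1)^a' * (\<Sum>\<^sub>\<infinity>b'. pmf p2 b' * ((-1::real)^b' * x (n + int (a + a') - int (b + b'))))" for b
    proof -
      have "G a b a' = (\<Sum>\<^sub>\<infinity>b'. (-1)^a' * (pmf p2 b' * ((-1::real)^b' * x (n + int (a + a') - int (b + b')))))"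
        unfolding G_def by (intro infsum_cong) (simp add: algebra_simps)
      also have "\<dots> = (-1)^a' * (\<Sum>\<^sub>\<infinity>b'. pmf p2 b' * ((-1::real)^b' * x (n + int (a + a') - int (b + b'))))"
        by (rule infsum_cmult_right) (rule wsumm, rule xb'')
      finally show ?thesis .
    qed
    then have "(\<Sum>\<^sub>\<infinity>b. pmf p2 b * G a b a') = (\<Sum>\<^sub>\<infinity>b. (-1)^a' * (pmf p2 b * (\<Sum>\<^sub>\<infinity>b'. pmf p2 b' * ((-1::real)^b' * x (n + int (a + a') - int (b + b'))))))"
      by (intro infsum_cong) (simp add: algebra_simps)
    also have "\<dots> = (-1)^a' * h (a + a')"
      unfolding h_def
      by (rule infsum_cmult_right) (rule wsumm, rule wbound, rule xb'')
    finally show ?thesis .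
  qed
  have "(\<Sum>\<^sub>\<infinity>a. pmf p1 a * (\<Sum>\<^sub>\<infinity>b. pmf p2 b * y (n + int a - int b)))
      = (\<Sum>\<^sub>\<infinity>a. pmf p1 a * (\<Sum>\<^sub>\<infinity>a'. pmf p1 a' * ((-1)^a' * h (a + a'))))"
    by (simp add: step1 step2 step3)
  also have "\<dots> = exp (-2*l1) * h 0"
    unfolding p1_def by (rule alt_conv[OF l1 hb])
  also have "h 0 = (\<Sum>\<^sub>\<infinity>b. pmf p2 b * (\<Sum>\<^sub>\<infinity>b'. pmf p2 b' * ((-1)^b' * (\<lambda>s. x (n - int s)) (b + b'))))"
    unfolding h_def by simp
  also have "\<dots> = exp (-2*l2) * x n"
    unfolding p2_def by (subst alt_conv[OF l2, where B=B]) (auto simp: xb)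
  finally show ?thesis unfolding p1_def p2_def by simp
qed


theorem theorem7:
  fixes l1 l2 :: real and x :: "int \<Rightarrow> real"
  assumes "l1 > 0" and "l2 > 0"
    and "bounded (range x)"
    and "\<And>k::int. (\<Sum>\<^sub>\<infinity>j\<in>(UNIV::int set). (-1) powi j * f_Z j l1 l2 * x (k + j)) \<ge> 0"
  shows "x \<in> rowcone {M_skell l1 l2}"
proof -
  note l1 = assms(1) and l2 = assms(2)
  obtain B where Bpos: "B > 0" and xb0: "\<forall>v\<in>range x. norm v \<le> B"
    using assms(3) unfolding bounded_pos by blast
  have xb: "\<bar>x n\<bar> \<le> B" for n using xb0 by auto
  define p1 where "p1 = poisson_pmf l1"
  define p2 where "p2 = poisson_pmf l2"
  define y where "y = (\<lambda>k. (\<Sum>\<^sub>\<infinity>a. pmf (poisson_pmf l1) a * (\<Sum>\<^sub>\<infinity>b. pmf (poisson_pmf l2) b *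
            ((-1)^a * (-1)^b * x (k + int a - int b)))))"
  have yeq: "y k = (\<Sum>\<^sub>\<infinity>j\<in>(UNIV::int set). (-1) powi j * f_Z j l1 l2 * x (k + j))" for k
    unfolding y_def by (rule hyp_conv[OF xb, symmetric])
  have ynn: "y k \<ge> 0" for k
    using assms(4)[of k] yeq[of k] by simp
  have yb: "\<bar>y k\<bar> \<le> B" for k
    unfolding y_def by (rule inner_bound) (use xb in \<open>simp add: abs_mult\<close>)
  define D where "D = B + 1"
  have Dpos: "D > 0" and yD: "y k / D \<le> 1" "y k / D \<ge> 0" for k
    using yb[of k] ynn[of k] Bpos by (auto simp: D_def)
  define f where "f = (\<lambda>b::bool. if b then (1::int) else 0)"
  have injf: "inj f" unfolding f_def by (auto simp: inj_def split: if_splits)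
  define A where "A = (\<lambda>m. map_pmf f (bernoulli_pmf (y m / D)))"
  have pA: "pmf (A m) 1 = y m / D" for m
  proof -
    have "pmf (A m) (f True) = pmf (bernoulli_pmf (y m / D)) True"
      unfolding A_def by (rule pmf_map_inj'[OF injf])
    then show ?thesis using yD[of m] by (simp add: f_def)
  qed
  define M' where "M' = postproc A (M_skell l1 l2)"
  have M'CNF: "M' \<in> CNF {M_skell l1 l2}"
    unfolding M'_def by (intro CNF.post CNF.base) simp
  define PP where "PP = pair_pmf p1 p2"
  have yb2: "\<bar>(\<lambda>(a,b). y (n + (int a - int b))) ab\<bar> \<le> B" for n ab
    by (cases ab) (simp add: yb)
  have pM: "pmf (M' n) 1 = exp (-2*l1) * exp (-2*l2) * x n / D" for n
  proof -
    have "pmf (M' n) 1 = measure_pmf.expectation (M_skell l1 l2 n) (\<lambda>z. pmf (A z) 1)"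
      unfolding M'_def postproc_def by (rule pmf_bind)
    also have "\<dots> = measure_pmf.expectation (M_skell l1 l2 n) (\<lambda>z. y z) / D"
      by (simp add: pA)
    also have "measure_pmf.expectation (M_skell l1 l2 n) (\<lambda>z. y z)
        = measure_pmf.expectation PP (\<lambda>(a,b). y (n + (int a - int b)))"
      by (simp add: M_skell_def skellam_pmf_def PP_def p1_def p2_def case_prod_unfold)
    also have "\<dots> = (\<Sum>\<^sub>\<infinity>ab. pmf PP ab * (\<lambda>(a,b). y (n + (int a - int b))) ab)"
      by (rule expect_infsum[OF yb2])
    also have "\<dots> = (\<Sum>\<^sub>\<infinity>(a,b). pmf p1 a * pmf p2 b * y (n + int a - int b))"
      by (intro infsum_cong) (auto simp: PP_def pmf_pair algebra_simps)
    also have "\<dots> = (\<Sum>\<^sub>\<infinity>a. pmf p1 a * (\<Sum>\<^sub>\<infinity>b. pmf p2 b * y (n + int a - int b)))"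
      by (rule pair_sum[where B=B]) (rule yb)
    also have "\<dots> = exp (-2*l1) * exp (-2*l2) * x n"
      unfolding y_def p1_def p2_def by (rule core[OF l1 l2 xb])
    finally show ?thesis .
  qed
  define c where "c = D * exp (2*l1) * exp (2*l2)"
  have c0: "c \<ge> 0" using Dpos by (simp add: c_def)
  have e1: "exp (2*l1) * exp (-2*l1) = 1" "exp (2*l2) * exp (-2*l2) = 1"
    by (simp_all add: exp_add[symmetric])
  have xeq: "x n = c * pmf (M' n) 1" for n
  proof -
    have "c * pmf (M' n) 1 = (D / D) * (exp (2*l1) * exp (-2*l1)) * (exp (2*l2) * exp (-2*l2)) * x n"
      by (simp add: pM c_def)
    then show ?thesis using e1 Dpos by simp
  qed
  show ?thesis
  proof (cases "\<exists>n. x n \<noteq> 0")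
    case True
    then obtain n0 where "x n0 \<noteq> 0" by blast
    then have "pmf (M' n0) 1 \<noteq> 0" using xeq[of n0] by auto
    then have "1 \<in> alg_range M'" unfolding alg_range_def by (auto simp: set_pmf_iff)
    moreover have "x = (\<lambda>n. c * pmf (M' n) 1)" using xeq by auto
    ultimately show ?thesis unfolding rowcone_def using c0 M'CNF by blast
  next
    case False
    obtain w where w: "w \<in> set_pmf (M_skell l1 l2 0)" using set_pmf_not_empty[of "M_skell l1 l2 0"] by blast
    then have "w \<in> alg_range (M_skell l1 l2)" unfolding alg_range_def by auto
    moreover have "x = (\<lambda>n. 0 * pmf (M_skell l1 l2 n) w)" using False by auto
    moreover have "M_skell l1 l2 \<in> CNF {M_skell l1 l2}" by (intro CNF.base) simp
    ultimately show ?thesis unfolding rowcone_def by fastforce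
  qed
qed

end
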